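(* Let $G$ be an always solvable graph with $n\ge 1$ vertices. Then there exists a chain of always solvable subgraphs $G=G_0\supset G_1\supset\cdots\supset G_{n-1}=K_1$, where for each $k$, $G_k$ is obtained from $G_{k-1}$ by deleting a single vertex (together with its incident edges).
   Context: For a finite simple graph $G$ with vertex set $\{v_1,\dots,v_n\}$, the closed adjacency matrix $N(G)$ is the $n\times n$ matrix over $\mathbb{Z}_2$ whose $(i,j)$ entry is $1$ iff $i=j$ or $v_i$ is adjacent to $v_j$. The nullity of $G$ is $\nu(G):=\dim\operatorname{Ker}(N(G))$ over $\mathbb{Z}_2$. $G$ is called always solvable if $\nu(G)=0$, equivalently if for every $\mathbf{c}\in\mathbb{Z}_2^{V(G)}$ there is $\mathbf{p}$ with $N(G)\mathbf{p}=\mathbf{c}$ (Lights Out game: every configuration can be turned off). *)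

theory Defs
  imports Main "HOL-Library.Z2"
begin

definition simple_graph :: "'a set \<Rightarrow> ('a \<Rightarrow> 'a \<Rightarrow> bool) \<Rightarrow> bool" where
  "simple_graph V E \<longleftrightarrow> finite V \<and> (\<forall>x\<in>V. \<forall>y\<in>V. E x y \<longleftrightarrow> E y x) \<and> (\<forall>x\<in>V. \<not> E x x)"

definition closed_adj :: "'a set \<Rightarrow> ('a \<Rightarrow> 'a \<Rightarrow> bool) \<Rightarrow> 'a \<Rightarrow> 'a \<Rightarrow> bit" where
  "closed_adj V E i j = (if i = j \<or> E i j then 1 else 0)"

definition closed_kernel :: "'a set \<Rightarrow> ('a \<Rightarrow> 'a \<Rightarrow> bool) \<Rightarrow> ('a \<Rightarrow> bit) set" where
  "closed_kernel V E = {p. (\<forall>x. x \<notin> V \<longrightarrow> p x = 0) \<and>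
       (\<forall>i\<in>V. (\<Sum>j\<in>V. closed_adj V E i j * p j) = 0)}"

text \<open>Always solvable: nullity dim Ker N(G) = 0, i.e. the kernel is the zero space.\<close>
definition always_solvable :: "'a set \<Rightarrow> ('a \<Rightarrow> 'a \<Rightarrow> bool) \<Rightarrow> bool" where
  "always_solvable V E \<longleftrightarrow> closed_kernel V E = {\<lambda>_. 0}"

end

theory Submission imports Defs begin

declare add_bit_eq_xor[simp del] mult_bit_eq_and[simp del]

lemma bit_add_self: "x + x = (0::bit)"
  by (cases x) simp_all

lemma bit_mult_self: "x * x = (x::bit)"
  by (cases x) simp_all

lemma delta_l: "finite V \<Longrightarrow> j \<in> V \<Longrightarrow> (\<Sum>k\<in>V. (if k = j then 1 else 0) * g k) = (g j :: bit)"
proof -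
  assume a: "finite V" "j \<in> V"
  have "(\<Sum>k\<in>V. (if k = j then 1 else 0) * g k) = (\<Sum>k\<in>V. if k = j then g k else 0)"
    by (intro sum.cong) auto
  then show ?thesis using a by simp
qed

lemma delta_r: "finite V \<Longrightarrow> j \<in> V \<Longrightarrow> (\<Sum>k\<in>V. g k * (if k = j then 1 else 0)) = (g j :: bit)"
  using delta_l[of V j g] by (simp add: mult.commute)

lemma delta_c: "finite V \<Longrightarrow> j \<in> V \<Longrightarrow> (\<Sum>k\<in>V. (if j = k then 1 else 0)) = (1 :: bit)"
  by (simp add: eq_commute[of j])

lemma quad_form:
  fixes f :: "'a \<Rightarrow> 'a \<Rightarrow> bit"
  assumes "finite V" "\<And>i j. i \<in> V \<Longrightarrow> j \<in> V \<Longrightarrow> f i j = f j i"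
  shows "(\<Sum>i\<in>V. \<Sum>j\<in>V. f i j) = (\<Sum>i\<in>V. f i i)"
  using assms
proof (induction V rule: finite_induct)
  case empty
  then show ?case by simp
next
  case (insert a F)
  have s: "(\<Sum>i\<in>F. f i a) = (\<Sum>j\<in>F. f a j)"
    using insert.prems by (intro sum.cong) auto
  have "(\<Sum>i\<in>insert a F. \<Sum>j\<in>insert a F. f i j)
      = (f a a + (\<Sum>j\<in>F. f a j)) + (\<Sum>i\<in>F. f i a + (\<Sum>j\<in>F. f i j))"
    using insert.hyps by (simp add: sum.insert)
  also have "\<dots> = f a a + ((\<Sum>j\<in>F. f a j) + (\<Sum>i\<in>F. f i a)) + (\<Sum>i\<in>F. \<Sum>j\<in>F. f i j)"
    by (simp add: sum.distrib algebra_simps)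
  also have "\<dots> = f a a + (\<Sum>i\<in>F. \<Sum>j\<in>F. f i j)"
    by (simp add: s bit_add_self)
  also have "\<dots> = f a a + (\<Sum>i\<in>F. f i i)"
    using insert by simp
  finally show ?case using insert.hyps by simp
qed

lemma delete_vertex:
  assumes sg: "simple_graph V E" and ne: "V \<noteq> {}" and as: "always_solvable V E"
  shows "\<exists>v\<in>V. always_solvable (V - {v}) E"
proof (rule ccontr)
  assume nt: "\<not> ?thesis"
  define N where "N = closed_adj V E"
  have fin: "finite V" using sg by (simp add: simple_graph_def)
  have Nsym: "N i j = N j i" if "i \<in> V" "j \<in> V" for i j
    using sg that by (auto simp: N_def closed_adj_def simple_graph_def)
  have Ndiag: "N i i = 1" for i by (simp add: N_def closed_adj_def)
  have zk: "(\<lambda>_. 0) \<in> closed_kernel W E" for W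
    by (simp add: closed_kernel_def)
  have "\<forall>v\<in>V. \<exists>p. p \<in> closed_kernel (V - {v}) E \<and> p \<noteq> (\<lambda>_. 0)"
  proof
    fix v assume "v \<in> V"
    with nt have "closed_kernel (V - {v}) E \<noteq> {\<lambda>_. 0}"
      by (auto simp: always_solvable_def)
    with zk show "\<exists>p. p \<in> closed_kernel (V - {v}) E \<and> p \<noteq> (\<lambda>_. 0)" by blast
  qed
  then obtain P where P: "\<And>v. v \<in> V \<Longrightarrow> P v \<in> closed_kernel (V - {v}) E \<and> P v \<noteq> (\<lambda>_. 0)"
    by metis
  have Pout: "P v x = 0" if "v \<in> V" "x \<notin> V - {v}" for v x
    using P[OF that(1)] that(2) by (simp add: closed_kernel_def)
  have NP: "(\<Sum>j\<in>V. N i j * P v j) = (if i = v then 1 else 0)" if "v \<in> V" "i \<in> V" for v i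
  proof -
    have eqV: "(\<Sum>j\<in>V. N i j * P v j) = (\<Sum>j\<in>V - {v}. N i j * P v j)"
      using fin that Pout by (simp add: sum.remove[of V v])
    show ?thesis
    proof (cases "i = v")
      case False
      then show ?thesis using P[OF that(1)] that eqV
        by (simp add: closed_kernel_def N_def closed_adj_def)
    next
      case True
      show ?thesis
      proof (rule ccontr)
        assume "(\<Sum>j\<in>V. N i j * P v j) \<noteq> (if i = v then 1 else 0)"
        then have z: "(\<Sum>j\<in>V. N v j * P v j) = 0" using True by simp
        have "P v \<in> closed_kernel V E"
          unfolding closed_kernel_def
        proof (intro CollectI conjI allI impI ballI)
          fix x assume "x \<notin> V" then show "P v x = 0" using Pout that by auto
        next
          fix k assume k: "k \<in> V"
          show "(\<Sum>j\<in>V. closed_adj V E k j * P v j) = 0"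
          proof (cases "k = v")
            case True then show ?thesis using z by (simp add: N_def)
          next
            case False
            then have "(\<Sum>j\<in>V. N k j * P v j) = (\<Sum>j\<in>V - {v}. N k j * P v j)"
              using fin that Pout by (simp add: sum.remove[of V v])
            then show ?thesis using P[OF that(1)] False k
              by (simp add: closed_kernel_def N_def closed_adj_def)
          qed
        qed
        then have "P v = (\<lambda>_. 0)" using as by (simp add: always_solvable_def)
        then show False using P[OF that(1)] by simp
      qed
    qed
  qed
  have Psym: "P i j = P j i" if "i \<in> V" "j \<in> V" for i j
  proof -
    have "P i j = (\<Sum>k\<in>V. (if k = j then 1 else 0) * P i k)"
      using fin that by (simp add: delta_l delta_r)
    also have "\<dots> = (\<Sum>k\<in>V. (\<Sum>l\<in>V. N k l * P j l) * P i k)"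
      using NP that by (intro sum.cong) auto
    also have "\<dots> = (\<Sum>k\<in>V. \<Sum>l\<in>V. N k l * P j l * P i k)"
      by (simp add: sum_distrib_right)
    also have "\<dots> = (\<Sum>k\<in>V. \<Sum>l\<in>V. P j l * (N l k * P i k))"
      using Nsym by (auto simp: algebra_simps intro!: sum.cong)
    also have "\<dots> = (\<Sum>l\<in>V. P j l * (\<Sum>k\<in>V. N l k * P i k))"
      by (subst sum.swap) (simp add: sum_distrib_left)
    also have "\<dots> = (\<Sum>l\<in>V. P j l * (if l = i then 1 else 0))"
      using NP that by (intro sum.cong) auto
    also have "\<dots> = P j i" using fin that by (simp add: delta_l delta_r)
    finally show ?thesis .
  qed
  have Psum: "(\<Sum>k\<in>V. P i k) = 0" if "i \<in> V" for i
  proof -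
    have "(\<Sum>k\<in>V. P i k) = (\<Sum>k\<in>V. P i k * N k k * P i k)"
      by (simp add: Ndiag bit_mult_self)
    also have "\<dots> = (\<Sum>k\<in>V. \<Sum>l\<in>V. P i k * N k l * P i l)"
      using fin Nsym by (intro quad_form[symmetric]) (auto simp: algebra_simps)
    also have "\<dots> = (\<Sum>k\<in>V. P i k * (\<Sum>l\<in>V. N k l * P i l))"
      by (simp add: sum_distrib_left algebra_simps)
    also have "\<dots> = (\<Sum>k\<in>V. P i k * (if k = i then 1 else 0))"
      using NP that by (intro sum.cong) auto
    also have "\<dots> = P i i" using fin that by (simp add: delta_l delta_r)
    also have "\<dots> = 0" using Pout that by simp
    finally show ?thesis .
  qed
  obtain a where a: "a \<in> V" using ne by blast
  have "(1::bit) = (\<Sum>i\<in>V. (if a = i then 1 else 0))"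
    using fin a by (simp add: delta_c)
  also have "\<dots> = (\<Sum>i\<in>V. \<Sum>j\<in>V. N a j * P i j)"
    using NP a by (intro sum.cong) auto
  also have "\<dots> = (\<Sum>j\<in>V. N a j * (\<Sum>i\<in>V. P i j))"
    by (subst sum.swap) (simp add: sum_distrib_left)
  also have "\<dots> = (\<Sum>j\<in>V. N a j * (\<Sum>i\<in>V. P j i))"
    using Psym by (intro sum.cong) auto
  also have "\<dots> = 0" using Psum by simp
  finally show False by simp
qed

lemma chain_aux:
  "\<forall>V. card V = n \<longrightarrow> n \<ge> 1 \<longrightarrow> simple_graph V E \<longrightarrow> always_solvable V E \<longrightarrow>
    (\<exists>Vs :: 'a set list.
           length Vs = card V \<and>
           Vs ! 0 = V \<and>
           (\<forall>k < card V. always_solvable (Vs ! k) E) \<and>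
           (\<forall>k. 1 \<le> k \<and> k < card V \<longrightarrow>
                (\<exists>v \<in> Vs ! (k - 1). Vs ! k = Vs ! (k - 1) - {v})) \<and>
           card (Vs ! (card V - 1)) = 1)"
proof (induction n)
  case 0
  then show ?case by simp
next
  case (Suc n)
  show ?case
  proof (intro allI impI)
    fix V :: "'a set"
    assume c: "card V = Suc n" and sg: "simple_graph V E" and as: "always_solvable V E"
    show "\<exists>Vs :: 'a set list.
           length Vs = card V \<and>
           Vs ! 0 = V \<and>
           (\<forall>k < card V. always_solvable (Vs ! k) E) \<and>
           (\<forall>k. 1 \<le> k \<and> k < card V \<longrightarrow>
                (\<exists>v \<in> Vs ! (k - 1). Vs ! k = Vs ! (k - 1) - {v})) \<and>
           card (Vs ! (card V - 1)) = 1"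
    proof (cases "n = 0")
      case True
      then show ?thesis using c as by (intro exI[of _ "[V]"]) auto
    next
      case False
      have fin: "finite V" using sg by (simp add: simple_graph_def)
      have ne: "V \<noteq> {}" using c by auto
      obtain v where v: "v \<in> V" and as': "always_solvable (V - {v}) E"
        using delete_vertex[OF sg ne as] by blast
      have c': "card (V - {v}) = n" using c v fin by simp
      have sg': "simple_graph (V - {v}) E" using sg by (auto simp: simple_graph_def)
      obtain Vs where Vs: "length Vs = n" "Vs ! 0 = V - {v}"
           "\<forall>k < n. always_solvable (Vs ! k) E"
           "\<forall>k. 1 \<le> k \<and> k < n \<longrightarrow> (\<exists>v \<in> Vs ! (k - 1). Vs ! k = Vs ! (k - 1) - {v})"
           "card (Vs ! (n - 1)) = 1"
        using Suc.IH[rule_format, OF c' _ sg' as'] False unfolding c' by (metis One_nat_def Suc_leI not_gr_zero)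
      show ?thesis
      proof (intro exI[of _ "V # Vs"] conjI allI impI)
        show "length (V # Vs) = card V" using Vs c by simp
        show "(V # Vs) ! 0 = V" by simp
      next
        fix k assume "k < card V"
        then show "always_solvable ((V # Vs) ! k) E" using Vs c as
          by (cases k) auto
      next
        fix k assume k: "1 \<le> k \<and> k < card V"
        show "\<exists>w \<in> (V # Vs) ! (k - 1). (V # Vs) ! k = (V # Vs) ! (k - 1) - {w}"
        proof (cases "k = 1")
          case True then show ?thesis using v Vs by auto
        next
          case False
          then obtain m where m: "k = Suc (Suc m)" using k by (cases k; cases "k - 1") auto
          then have "\<exists>w \<in> Vs ! m. Vs ! Suc m = Vs ! m - {w}"
            using Vs(4)[rule_format, of "Suc m"] k c by auto
          then show ?thesis using m by simp
        qed
      next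
        show "card ((V # Vs) ! (card V - 1)) = 1" using Vs c False
          by (cases n) auto
      qed
    qed
  qed
qed

theorem corollary2p9:
  fixes V :: "'a set" and E :: "'a \<Rightarrow> 'a \<Rightarrow> bool"
  assumes "simple_graph V E"
    and "card V \<ge> 1"
    and "always_solvable V E"
  shows "\<exists>Vs :: 'a set list.
           length Vs = card V \<and>
           Vs ! 0 = V \<and>
           (\<forall>k < card V. always_solvable (Vs ! k) E) \<and>
           (\<forall>k. 1 \<le> k \<and> k < card V \<longrightarrow>
                (\<exists>v \<in> Vs ! (k - 1). Vs ! k = Vs ! (k - 1) - {v})) \<and>
           card (Vs ! (card V - 1)) = 1"
  using chain_aux[of "card V" E, THEN spec[of _ V]] assms by blast

end
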